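(* Let $\ell,m,n$ be positive integers with $\ell<n$, $m<n$, $\gcd(m,n)=1$. Then $\ell^+$ equals the number of $L$'s in $\hat{\mathcal{X}}$, $\ell^-$ equals the number of $L$'s in $\hat{\mathcal{Y}}$, and $\ell^++\ell^-=\ell$.
   Context: $\mathcal{S}=\mathcal{F}[\ell,m,n]$ is the $n$-periodic sequence with $\mathcal{S}_i=L$ if $im\bmod n<\ell$ and $R$ otherwise. $d\in\{1,\dots,n-1\}$ is the inverse of $m$ mod $n$. $\hat{\mathcal{X}}=\mathcal{S}_0\cdots\mathcal{S}_{n-d-1}$ and $\hat{\mathcal{Y}}=\mathcal{S}_{n-d}\cdots\mathcal{S}_{n-1}$. The left and right Farey roots of $\frac mn$ are the fractions $\frac{m^-}{n^-}<\frac{m^+}{n^+}$ with $m^\pm\ge0$, $n^\pm\ge1$, $m^-+m^+=m$, $n^-+n^+=n$, $m^+n^--m^-n^+=1$; $\ell^+=\lceil\ell n^+/n\rceil$ and $\ell^-=\lfloor\ell n^-/n\rfloor$. *)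

theory Defs
  imports Complex_Main
begin

datatype letter = L | R

definition F :: "nat \<Rightarrow> nat \<Rightarrow> nat \<Rightarrow> nat \<Rightarrow> letter" where
  "F l m n i = (if (i * m) mod n < l then L else R)"

definition countL :: "(nat \<Rightarrow> letter) \<Rightarrow> nat \<Rightarrow> nat \<Rightarrow> nat" where
  "countL S a b = card {i \<in> {a..<b}. S i = L}"

text \<open>The left and right Farey roots m^-/n^- < m^+/n^+ of m/n.\<close>
definition farey_roots :: "nat \<Rightarrow> nat \<Rightarrow> nat \<Rightarrow> nat \<Rightarrow> nat \<Rightarrow> nat \<Rightarrow> bool" where
  "farey_roots m n mm nm mp np \<longleftrightarrow>
     nm \<ge> 1 \<and> np \<ge> 1 \<and> mm + mp = m \<and> nm + np = n \<and>
     int mp * int nm - int mm * int np = 1 \<and>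
     real mm / real nm < real mp / real np"

end

theory Submission
  imports Defs "HOL-Number_Theory.Number_Theory"
begin

lemma key1:
  fixes n np m l :: nat
  assumes n0: "0 < n" and np0: "0 < np" and ln: "l \<le> n"
    and dv: "n dvd m*np + 1" and cop: "coprime n np"
  shows "card {i\<in>{0..<np}. i*m mod n < l} = card {j. j*n < l*np}"
proof -
  define A where "A = {i\<in>{0..<np}. i*m mod n < l}"
  define B where "B = {j. j*n < l*np}"
  define g where "g j = (j*n) mod np" for j
  have Blt: "j < np" if "j \<in> B" for j
  proof -
    have "l*np \<le> n*np" using ln by (rule mult_le_mono1)
    moreover have "j*n < l*np" using that unfolding B_def by simp
    ultimately have "j*n < n*np" by (meson less_le_trans)
    hence "n*j < n*np" by (simp only: mult.commute[of j n])
    hence "0 < n \<and> j < np" by (simp only: mult_less_cancel1)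
    thus ?thesis by blast
  qed
  have inj: "inj_on g B"
  proof
    fix j j' assume j: "j \<in> B" and j': "j' \<in> B" and e: "g j = g j'"
    have "[j*n = j'*n] (mod np)" using e unfolding g_def cong_def .
    hence "[j = j'] (mod np)" using cong_mult_rcancel_nat[OF cop] by blast
    thus "j = j'" using Blt[OF j] Blt[OF j'] cong_less_modulus_unique_nat by blast
  qed
  have sub1: "g ` B \<subseteq> A"
  proof
    fix x assume "x \<in> g ` B"
    then obtain j where j: "j \<in> B" and x: "x = g j" by auto
    define k where "k = j*n div np"
    have ik: "x + k*np = j*n" unfolding x g_def k_def by simp
    have "j*n < l*np" using j unfolding B_def by simp
    hence "k*np < l*np" using ik by linarith
    hence kl: "k < l" by simp
    have "[x*m + k*(m*np+1) = j*n*m + k] (mod n)"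
    proof -
      have "x*m + k*(m*np+1) = (x + k*np)*m + k" by (simp add: algebra_simps)
      also have "\<dots> = j*n*m + k" using ik by simp
      finally have eq: "x*m + k*(m*np+1) = j*n*m + k" .
      show ?thesis unfolding eq by (rule cong_refl)
    qed
    moreover have "[x*m + k*(m*np+1) = x*m] (mod n)"
    proof -
      have "[k*(m*np+1) = 0] (mod n)" using dvd_mult[OF dv, of k] by (simp only: cong_0_iff)
      from cong_add[OF cong_refl[of "x*m"] this] show ?thesis by simp
    qed
    moreover have "[j*n*m + k = k] (mod n)"
    proof -
      have "j*n*m + k = k + (j*m)*n" by (simp add: algebra_simps)
      thus ?thesis unfolding cong_def by (simp only: mod_mult_self1)
    qed
    ultimately have "[x*m = k] (mod n)"
      using cong_trans cong_sym by blast
    hence "x*m mod n = k" using kl ln by (simp add: cong_def)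
    moreover have "x < np" unfolding x g_def using np0 by simp
    ultimately show "x \<in> A" unfolding A_def using kl by simp
  qed
  have sub2: "A \<subseteq> g ` B"
  proof
    fix i assume "i \<in> A"
    hence i: "i < np" and kl: "i*m mod n < l" unfolding A_def by auto
    define k where "k = i*m mod n"
    have "[k*np + i = i*(m*np+1)] (mod n)"
    proof -
      have "[k*np + i = i*m*np + i] (mod n)" unfolding k_def
        by (intro cong_add cong_mult cong_refl) (simp add: cong_def)
      thus ?thesis by (simp add: algebra_simps)
    qed
    moreover have "[i*(m*np+1) = 0] (mod n)" using dvd_mult[OF dv, of i] by (simp only: cong_0_iff)
    ultimately have "n dvd k*np + i" using cong_0_iff cong_trans by blast
    then obtain j where jd: "k*np + i = n*j" by blast
    have "j*n < l*np"
    proof -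
      have "k*np + i < (k+1)*np" using i by simp
      also have "\<dots> \<le> l*np" using kl k_def by (intro mult_le_mono1) simp
      finally show ?thesis using jd by (simp add: mult.commute)
    qed
    moreover have "g j = i"
    proof -
      have "j*n = i + k*np" using jd by (simp add: mult.commute)
      thus ?thesis unfolding g_def using i by simp
    qed
    ultimately show "i \<in> g ` B" unfolding B_def by force
  qed
  have "bij_betw g B A" using inj sub1 sub2 unfolding bij_betw_def by blast
  thus ?thesis unfolding A_def B_def by (simp add: bij_betw_same_card)
qed

lemma card_mult_lt:
  fixes n x :: nat assumes "0 < n"
  shows "int (card {j. j*n < x}) = \<lceil>real x / real n\<rceil>"
proof -
  define c where "c = (x + n - 1) div n"
  have mem: "j*n < x \<longleftrightarrow> j < c" for j
  proof
    assume "j*n < x"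
    hence "j*n + n \<le> x + n - 1" by simp
    hence "(j+1)*n \<le> x + n - 1" by (simp add: algebra_simps)
    hence "j + 1 \<le> c" unfolding c_def using assms
      by (metis div_le_mono nonzero_mult_div_cancel_right not_gr0)
    thus "j < c" by simp
  next
    assume "j < c"
    hence "j + 1 \<le> c" by simp
    hence "(j+1)*n \<le> c * n" by (rule mult_le_mono1)
    also have "\<dots> \<le> x + n - 1" unfolding c_def by simp
    finally show "j*n < x" using assms by (simp add: algebra_simps)
  qed
  have "{j. j*n < x} = {..<c}" using mem by auto
  hence cc: "card {j. j*n < x} = c" by simp
  have dm: "c*n + (x+n-1) mod n = x+n-1" unfolding c_def by (rule div_mult_mod_eq)
  have "(x+n-1) mod n < n" using assms by simp
  hence "x \<le> c*n" using dm assms by linarith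
  moreover have "c*n < x + n" using dm assms by linarith
  ultimately have "real x \<le> real (c*n)" "real (c*n) < real (x + n)"
    by (simp_all only: of_nat_le_iff of_nat_less_iff)
  hence "real x \<le> real c * real n" "real c * real n < real x + real n" by simp_all
  hence "\<lceil>real x / real n\<rceil> = int c" using assms
    by (intro ceiling_unique) (auto simp: field_simps)
  thus ?thesis using cc by simp
qed

lemma total_count:
  fixes n m d l :: nat
  assumes n0: "0 < n" and ln: "l \<le> n" and dm: "(d*m) mod n = 1"
  shows "card {i\<in>{0..<n}. i*m mod n < l} = l"
proof -
  define h where "h k = k*d mod n" for k
  have n1: "1 < n" using dm n0 by (cases "n = 1") auto
  have dmc: "[d*m = 1] (mod n)" using dm n1 by (simp add: cong_def)
  have bk: "(h k)*m mod n = k" if "k < n" for k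
  proof -
    have "[(h k)*m = k*d*m] (mod n)" unfolding h_def by (simp add: cong_def mod_mult_left_eq)
    moreover have "[k*d*m = k*1] (mod n)" using dmc
      by (metis cong_scalar_left mult.assoc)
    ultimately have "[(h k)*m = k] (mod n)" by (metis cong_trans mult_1_right)
    thus ?thesis using that by (simp add: cong_def)
  qed
  have inj: "inj_on h {..<l}"
  proof
    fix a b assume a: "a \<in> {..<l}" and b: "b \<in> {..<l}" and e: "h a = h b"
    have "a = (h a)*m mod n" using bk a ln by simp
    also have "\<dots> = (h b)*m mod n" using e by simp
    also have "\<dots> = b" using bk b ln by simp
    finally show "a = b" .
  qed
  have "h ` {..<l} = {i\<in>{0..<n}. i*m mod n < l}"
  proof (intro equalityI subsetI)
    fix x assume "x \<in> h ` {..<l}"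
    then obtain k where k: "k < l" "x = h k" by auto
    thus "x \<in> {i\<in>{0..<n}. i*m mod n < l}" using bk[of k] ln n0 unfolding h_def by auto
  next
    fix i assume "i \<in> {i\<in>{0..<n}. i*m mod n < l}"
    hence i: "i < n" "i*m mod n < l" by auto
    have "[h (i*m mod n) = i*m*d] (mod n)" unfolding h_def by (simp add: cong_def mod_mult_left_eq)
    moreover have "[i*m*d = i*1] (mod n)" using dmc
      by (metis cong_scalar_left mult.assoc mult.commute)
    ultimately have "[h (i*m mod n) = i] (mod n)" by (metis cong_trans mult_1_right)
    hence "h (i*m mod n) = i" using i n0 unfolding h_def by (simp add: cong_def)
    thus "i \<in> h ` {..<l}" using i by force
  qed
  hence "bij_betw h {..<l} {i\<in>{0..<n}. i*m mod n < l}" using inj unfolding bij_betw_def by blast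
  thus ?thesis using bij_betw_same_card by fastforce
qed


theorem lemma3p7:
  fixes l m n d mm nm mp np :: nat
  assumes "0 < l" "0 < m" "l < n" "m < n" "coprime m n"
    and "d \<in> {1..n-1}" "(d * m) mod n = 1"
    and "farey_roots m n mm nm mp np"
  shows "int (countL (F l m n) 0 (n - d)) = \<lceil>real l * real np / real n\<rceil>
       \<and> int (countL (F l m n) (n - d) n) = \<lfloor>real l * real nm / real n\<rfloor>
       \<and> \<lceil>real l * real np / real n\<rceil> + \<lfloor>real l * real nm / real n\<rfloor> = int l"
proof -
  from assms(8) have fr: "nm \<ge> 1" "np \<ge> 1" "mm + mp = m" "nm + np = n"
    "int mp * int nm - int mm * int np = 1" unfolding farey_roots_def by auto
  have n0: "0 < n" using assms by simp
  have "int (mp*n) = int (m*np + 1)"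
  proof -
    have "int (mp*n) = int mp * (int nm + int np)" using fr(4) by (metis of_nat_add of_nat_mult)
    moreover have "int (m*np+1) = (int mm + int mp) * int np + 1" using fr(3) by (metis of_nat_add of_nat_mult of_nat_1)
    ultimately show ?thesis using fr(5) by (simp add: algebra_simps)
  qed
  hence mpn: "mp*n = m*np + 1" by (simp only: of_nat_eq_iff)
  have dv: "n dvd m*np + 1" using mpn by (metis dvd_triv_right)
  have cop: "coprime n np"
  proof -
    have "gcd n np dvd mp*n" by simp
    hence h2: "gcd n np dvd m*np + 1" using mpn by simp
    have h1: "gcd n np dvd m*np" by simp
    have "gcd n np dvd 1" by (rule iffD1[OF dvd_add_right_iff[OF h1] h2])
    thus ?thesis by (rule iffD1[OF is_unit_gcd])
  qed
  have npd: "np = n - d"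
  proof -
    have n1: "1 < n" using assms(6,7) by (cases "n = 1") auto
    have dmc: "[d*m = 1] (mod n)" using assms(7) n1 by (simp add: cong_def)
    have "[d*m*np + d = 1*np + d] (mod n)" using dmc by (intro cong_add cong_mult cong_refl)
    moreover have "n dvd d*m*np + d"
    proof -
      have "d*m*np + d = d*(m*np+1)" by (simp add: algebra_simps)
      thus ?thesis using dv by (metis dvd_mult)
    qed
    ultimately have "n dvd np + d" by (simp add: cong_dvd_iff)
    then obtain k where k: "np + d = n*k" by blast
    have "np + d < 2*n" "0 < np + d" using fr assms(6) by auto
    hence "k = 1"
    proof -
      have "k \<noteq> 0" using k \<open>0 < np + d\<close> by auto
      moreover have "\<not> 2 \<le> k"
      proof
        assume "2 \<le> k"
        hence "n*2 \<le> n*k" by (rule mult_le_mono2)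
        thus False using k \<open>np + d < 2*n\<close> by simp
      qed
      ultimately show ?thesis by simp
    qed
    thus ?thesis using k by simp
  qed
  have Fc: "countL (F l m n) a b = card {i\<in>{a..<b}. i*m mod n < l}" for a b
    unfolding countL_def F_def by (intro arg_cong[where f=card]) auto
  have c1: "countL (F l m n) 0 (n - d) = card {j. j*n < l*np}"
    using key1[OF n0 _ _ dv cop, of l] fr assms Fc npd by simp
  have ceq: "int (countL (F l m n) 0 (n - d)) = \<lceil>real l * real np / real n\<rceil>"
    using c1 card_mult_lt[OF n0, of "l*np"] by simp
  have tot: "countL (F l m n) 0 n = l" using Fc total_count[OF n0 _ assms(7), of l] assms by simp
  have split: "countL (F l m n) 0 n = countL (F l m n) 0 (n - d) + countL (F l m n) (n - d) n"
  proof -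
    have U: "{i\<in>{0..<n}. F l m n i = L} = {i\<in>{0..<n-d}. F l m n i = L} \<union> {i\<in>{n-d..<n}. F l m n i = L}"
      by auto
    have D: "{i\<in>{0..<n-d}. F l m n i = L} \<inter> {i\<in>{n-d..<n}. F l m n i = L} = {}" by auto
    show ?thesis unfolding countL_def U by (rule card_Un_disjoint) (use D in auto)
  qed
  have fl: "\<lfloor>real l * real nm / real n\<rfloor> = int l - \<lceil>real l * real np / real n\<rceil>"
  proof -
    have "real l * real nm / real n = real l - real l * real np / real n"
    proof -
      have "real n = real nm + real np" using fr(4) by simp
      thus ?thesis using n0 by (simp add: field_simps)
    qed
    moreover have "\<lfloor>- (real l * real np / real n) + of_int (int l)\<rfloor> = \<lfloor>- (real l * real np / real n)\<rfloor> + int l"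
      by (rule floor_add_int[symmetric])
    ultimately show ?thesis by (simp add: ceiling_def)
  qed
  show ?thesis using ceq tot split fl by linarith
qed

end
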